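(* Let $\tau=\{\tau_1,\dots,\tau_n\}$ be an implicit-deadline sporadic task set with $\tau_i=(T_i,C_i,T_i)$, $T_i$ positive integers and $0<C_i\le T_i$, and let $m$ be a positive integer. Then $\tau$ is schedulable on $m$ identical unit-capacity processors by the VC-IDT algorithm if and only if $$\sum_{i=1}^n\frac{C_i}{T_i}\le m.$$
   Context: Sporadic task $\tau_i=(T_i,C_i,T_i)$: it releases jobs at arbitrary real times separated by at least $T_i$. Each job needs at most $C_i$ units of execution within $T_i$ time units of its release, and never executes on two processors simultaneously. VC-IDT algorithm: - Let $\Pi=\gcd(T_1,\dots,T_n)$ and $\Theta_i=\Pi C_i/T_i$. - For each $i$ create a periodic server task $(\Pi,\Theta_i,\Pi)$; this is the MPR interface $\langle\Pi,\Theta_i,1\rangle$ of a one-processor virtual cluster containing only $\tau_i$. - Schedule the server tasks on the $m$ processors with McNaughton's algorithm. In every window $(j\Pi,(j+1)\Pi]$, taking the servers in a fixed order, fill processor $1$ starting at $j\Pi$. When processor $p$ is filled up to $(j+1)\Pi$, the rest of the current server's $\Theta_i$ units go on processor $p+1$ starting at $j\Pi$. - Whenever server $i$ is scheduled, the processor time it receives is used to execute pending jobs of $\tau_i$ in earliest-deadline-first order. $\tau$ is schedulable by VC-IDT if this procedure produces a valid schedule on $m$ processors in which every job of every admissible arrival sequence meets its deadline. *)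

theory Defs
  imports "HOL-Analysis.Analysis"
begin

text \<open>A task set with n tasks, indexed 0..n-1: task i = (T i, C i, T i).
  Periods are positive integers, worst-case execution times are reals.\<close>

definition Pi_gcd :: "nat \<Rightarrow> (nat \<Rightarrow> nat) \<Rightarrow> nat" where
  "Pi_gcd n T = Gcd (T ` {..<n})"

definition Theta :: "nat \<Rightarrow> (nat \<Rightarrow> nat) \<Rightarrow> (nat \<Rightarrow> real) \<Rightarrow> nat \<Rightarrow> real" where
  "Theta n T C i = real (Pi_gcd n T) * C i / real (T i)"

text \<open>Offset of server i on the McNaughton "stacked line" of length (number of processors) * Pi:
  servers are taken in the fixed order 0,1,...,n-1.\<close>
definition offs :: "nat \<Rightarrow> (nat \<Rightarrow> nat) \<Rightarrow> (nat \<Rightarrow> real) \<Rightarrow> nat \<Rightarrow> real" where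
  "offs n T C i = (\<Sum>k<i. Theta n T C k)"

text \<open>McNaughton schedule of the server tasks: server i runs on processor p (0-indexed) at time t
  iff, writing u = t - j*Pi for the window j containing t, the point p*Pi + u of the stacked line
  lies in the segment [offs i, offs i + Theta i). Windows are indexed by all integers j.\<close>
definition runs :: "nat \<Rightarrow> (nat \<Rightarrow> nat) \<Rightarrow> (nat \<Rightarrow> real) \<Rightarrow> nat \<Rightarrow> nat \<Rightarrow> real \<Rightarrow> bool" where
  "runs n T C i p t = (let P = real (Pi_gcd n T); x = real p * P + (t - P * of_int \<lfloor>t / P\<rfloor>) in
     i < n \<and> offs n T C i \<le> x \<and> x < offs n T C i + Theta n T C i)"

definition valid_on :: "nat \<Rightarrow> (nat \<Rightarrow> nat) \<Rightarrow> (nat \<Rightarrow> real) \<Rightarrow> nat \<Rightarrow> bool" where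
  "valid_on n T C m =
     ((\<forall>i p t. runs n T C i p t \<longrightarrow> p < m) \<and>
      (\<forall>i p q t. runs n T C i p t \<and> runs n T C i q t \<longrightarrow> p = q) \<and>
      (\<forall>i k p t. runs n T C i p t \<and> runs n T C k p t \<longrightarrow> i = k))"

definition server_supply :: "nat \<Rightarrow> (nat \<Rightarrow> nat) \<Rightarrow> (nat \<Rightarrow> real) \<Rightarrow> nat \<Rightarrow> real set" where
  "server_supply n T C i = {t. \<exists>p. runs n T C i p t}"

text \<open>Admissible arrival sequence of task i: job k released at r k with demand e k;
  consecutive releases separated by at least T i; demands between 0 and C i.
  (Finite sequences are covered by jobs with zero demand.)\<close>
definition admissible :: "(nat \<Rightarrow> nat) \<Rightarrow> (nat \<Rightarrow> real) \<Rightarrow> nat \<Rightarrow> (nat \<Rightarrow> real) \<Rightarrow> (nat \<Rightarrow> real) \<Rightarrow> bool" where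
  "admissible T C i r e = ((\<forall>k. r k + real (T i) \<le> r (Suc k)) \<and> (\<forall>k. 0 \<le> e k \<and> e k \<le> C i))"

text \<open>A job schedule sigma for task i: sigma t = Some k means job k executes at t.
  Work received by job k strictly before t:\<close>
definition work :: "(real \<Rightarrow> nat option) \<Rightarrow> nat \<Rightarrow> real \<Rightarrow> ennreal" where
  "work \<sigma> k t = emeasure lebesgue {s. s < t \<and> \<sigma> s = Some k}"

definition pending :: "(nat \<Rightarrow> real) \<Rightarrow> (nat \<Rightarrow> real) \<Rightarrow> (real \<Rightarrow> nat option) \<Rightarrow> nat \<Rightarrow> real \<Rightarrow> bool" where
  "pending r e \<sigma> k t = (r k \<le> t \<and> work \<sigma> k t < ennreal (e k))"

definition edf_sched :: "nat \<Rightarrow> (nat \<Rightarrow> nat) \<Rightarrow> (nat \<Rightarrow> real) \<Rightarrow> nat \<Rightarrow> (nat \<Rightarrow> real) \<Rightarrow> (nat \<Rightarrow> real)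
                          \<Rightarrow> (real \<Rightarrow> nat option) \<Rightarrow> bool" where
  "edf_sched n T C i r e \<sigma> =
     ((\<forall>t k. \<sigma> t = Some k \<longrightarrow> t \<in> server_supply n T C i \<and> pending r e \<sigma> k t \<and>
              (\<forall>k'. pending r e \<sigma> k' t \<longrightarrow> r k + real (T i) \<le> r k' + real (T i))) \<and>
      (\<forall>t. t \<in> server_supply n T C i \<and> (\<exists>k. pending r e \<sigma> k t) \<longrightarrow> \<sigma> t \<noteq> None))"

definition meets_deadlines :: "(nat \<Rightarrow> nat) \<Rightarrow> nat \<Rightarrow> (nat \<Rightarrow> real) \<Rightarrow> (nat \<Rightarrow> real) \<Rightarrow> (real \<Rightarrow> nat option) \<Rightarrow> bool" where
  "meets_deadlines T i r e \<sigma> =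
     (\<forall>k. ennreal (e k) \<le> emeasure lebesgue {s. s \<le> r k + real (T i) \<and> \<sigma> s = Some k})"

definition VC_IDT_schedulable :: "nat \<Rightarrow> (nat \<Rightarrow> nat) \<Rightarrow> (nat \<Rightarrow> real) \<Rightarrow> nat \<Rightarrow> bool" where
  "VC_IDT_schedulable n T C m =
     (valid_on n T C m \<and>
      (\<forall>i<n. \<forall>r e \<sigma>. admissible T C i r e \<and> edf_sched n T C i r e \<sigma> \<longrightarrow> meets_deadlines T i r e \<sigma>))"

end

theory Submission
  imports Defs
begin


lemma supply_repr_gen:
  fixes P o\<^sub>0 \<Theta> t :: real
  assumes P: "0 < P" and o: "0 \<le> o\<^sub>0"
  shows "(\<exists>p::nat. o\<^sub>0 \<le> real p * P + (t - P * of_int \<lfloor>t/P\<rfloor>) \<and> real p * P + (t - P * of_int \<lfloor>t/P\<rfloor>) < o\<^sub>0 + \<Theta>)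
     \<longleftrightarrow> (\<exists>j::int. o\<^sub>0 \<le> t + of_int j * P \<and> t + of_int j * P < o\<^sub>0 + \<Theta>)"
proof
  assume "\<exists>p::nat. o\<^sub>0 \<le> real p * P + (t - P * of_int \<lfloor>t/P\<rfloor>) \<and> real p * P + (t - P * of_int \<lfloor>t/P\<rfloor>) < o\<^sub>0 + \<Theta>"
  then obtain p :: nat where h: "o\<^sub>0 \<le> real p * P + (t - P * of_int \<lfloor>t/P\<rfloor>)" "real p * P + (t - P * of_int \<lfloor>t/P\<rfloor>) < o\<^sub>0 + \<Theta>" by blast
  have e: "t + of_int (int p - \<lfloor>t/P\<rfloor>) * P = real p * P + (t - P * of_int \<lfloor>t/P\<rfloor>)"
    by (simp add: algebra_simps)
  show "\<exists>j::int. o\<^sub>0 \<le> t + of_int j * P \<and> t + of_int j * P < o\<^sub>0 + \<Theta>"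
    by (rule exI[of _ "int p - \<lfloor>t/P\<rfloor>"]) (use h e in auto)
next
  assume "\<exists>j::int. o\<^sub>0 \<le> t + of_int j * P \<and> t + of_int j * P < o\<^sub>0 + \<Theta>"
  then obtain j :: int where h: "o\<^sub>0 \<le> t + of_int j * P" "t + of_int j * P < o\<^sub>0 + \<Theta>" by blast
  have fl: "t / P < of_int \<lfloor>t/P\<rfloor> + 1" by linarith
  have "t < (of_int \<lfloor>t/P\<rfloor> + 1) * P" by (metis fl pos_divide_less_eq[OF P])
  hence "0 < (of_int j + of_int \<lfloor>t/P\<rfloor> + 1) * P" using h o by (simp add: algebra_simps)
  hence "0 < of_int j + of_int \<lfloor>t/P\<rfloor> + (1::real)" using P by (simp add: zero_less_mult_iff)
  hence nn: "0 \<le> j + \<lfloor>t/P\<rfloor>" by linarith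
  have e: "real (nat (j + \<lfloor>t/P\<rfloor>)) * P + (t - P * of_int \<lfloor>t/P\<rfloor>) = t + of_int j * P"
    using nn by (simp add: algebra_simps)
  show "\<exists>p::nat. o\<^sub>0 \<le> real p * P + (t - P * of_int \<lfloor>t/P\<rfloor>) \<and> real p * P + (t - P * of_int \<lfloor>t/P\<rfloor>) < o\<^sub>0 + \<Theta>"
    by (rule exI[of _ "nat (j + \<lfloor>t/P\<rfloor>)"]) (use h e in auto)
qed

definition PS :: "real \<Rightarrow> real \<Rightarrow> real \<Rightarrow> real set" where
  "PS P o\<^sub>0 \<Theta> = {t. \<exists>j::int. o\<^sub>0 \<le> t + of_int j * P \<and> t + of_int j * P < o\<^sub>0 + \<Theta>}"

lemma PS_borel: "PS P o\<^sub>0 \<Theta> \<in> sets borel"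
proof -
  have "PS P o\<^sub>0 \<Theta> = (\<Union>j\<in>(UNIV::int set). {o\<^sub>0 - of_int j * P ..< o\<^sub>0 + \<Theta> - of_int j * P})"
    unfolding PS_def by (auto simp: algebra_simps)
  also have "\<dots> \<in> sets borel" by (intro sets.countable_UN') auto
  finally show ?thesis .
qed

lemma PS_window:
  fixes P o\<^sub>0 \<Theta> b :: real
  assumes P: "0 < P" and th: "0 \<le> \<Theta>" "\<Theta> \<le> P"
  shows "emeasure lborel (PS P o\<^sub>0 \<Theta> \<inter> {b..<b+P}) = ennreal \<Theta>"
proof -
  define j0 where "j0 = \<lfloor>(o\<^sub>0 - b)/P\<rfloor>"
  define s0 where "s0 = o\<^sub>0 - of_int j0 * P"
  have "of_int j0 \<le> (o\<^sub>0 - b)/P" "(o\<^sub>0 - b)/P < of_int j0 + 1" unfolding j0_def by linarith+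
  hence "of_int j0 * P \<le> o\<^sub>0 - b" "o\<^sub>0 - b < (of_int j0 + 1) * P"
    using P by (simp_all add: le_divide_eq divide_less_eq)
  hence s0: "b \<le> s0" "s0 < b + P" unfolding s0_def by (simp_all add: algebra_simps)
  have key: "t \<in> PS P o\<^sub>0 \<Theta> \<longleftrightarrow> (s0 \<le> t \<and> t < s0 + \<Theta>) \<or> t < s0 - P + \<Theta>"
    if t: "b \<le> t" "t < b + P" for t
  proof
    assume "t \<in> PS P o\<^sub>0 \<Theta>"
    then obtain j :: int where h: "o\<^sub>0 \<le> t + of_int j * P" "t + of_int j * P < o\<^sub>0 + \<Theta>"
      unfolding PS_def by blast
    have "of_int (j0 - j) * P < 1 * P" using h t s0 unfolding s0_def by (simp add: algebra_simps)
    hence "of_int (j0 - j) < (1::real)" using P by (simp only: mult_less_cancel_right_pos)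
    hence j1: "j0 \<le> j" by simp
    have "of_int (j - j0) * P < 2 * P" using h t s0 th unfolding s0_def by (simp add: algebra_simps)
    hence "of_int (j - j0) < (2::real)" using P by (simp only: mult_less_cancel_right_pos)
    hence j2: "j \<le> j0 + 1" by simp
    from j1 j2 have "j = j0 \<or> j = j0 + 1" by linarith
    then show "(s0 \<le> t \<and> t < s0 + \<Theta>) \<or> t < s0 - P + \<Theta>"
    proof
      assume "j = j0" thus ?thesis using h unfolding s0_def by (simp add: algebra_simps)
    next
      assume "j = j0 + 1" thus ?thesis using h unfolding s0_def by (simp add: algebra_simps)
    qed
  next
    assume "(s0 \<le> t \<and> t < s0 + \<Theta>) \<or> t < s0 - P + \<Theta>"
    then show "t \<in> PS P o\<^sub>0 \<Theta>"
    proof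
      assume "s0 \<le> t \<and> t < s0 + \<Theta>"
      thus ?thesis unfolding PS_def s0_def by (intro CollectI exI[of _ j0]) (simp add: algebra_simps)
    next
      assume "t < s0 - P + \<Theta>"
      moreover have "s0 - P \<le> t" using s0 t by simp
      ultimately show ?thesis unfolding PS_def s0_def
        by (intro CollectI exI[of _ "j0+1"]) (simp add: algebra_simps)
    qed
  qed
  show ?thesis
  proof (cases "s0 + \<Theta> \<le> b + P")
    case True
    have "PS P o\<^sub>0 \<Theta> \<inter> {b..<b+P} = {s0..<s0+\<Theta>}"
      using key s0 True th by auto
    thus ?thesis using th by simp
  next
    case False
    have eq: "PS P o\<^sub>0 \<Theta> \<inter> {b..<b+P} = {b..<s0-P+\<Theta>} \<union> {s0..<b+P}"
      using key s0 False th by auto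
    have "emeasure lborel ({b..<s0-P+\<Theta>} \<union> {s0..<b+P}) = emeasure lborel {b..<s0-P+\<Theta>} + emeasure lborel {s0..<b+P}"
      using th by (intro plus_emeasure[symmetric]) auto
    also have "\<dots> = ennreal (s0-P+\<Theta> - b) + ennreal (b+P - s0)" using False s0 by simp
    also have "\<dots> = ennreal \<Theta>" using False s0 by (subst ennreal_plus[symmetric]) auto
    finally show ?thesis using eq by simp
  qed
qed

lemma PS_windows:
  fixes P o\<^sub>0 \<Theta> a :: real
  assumes P: "0 < P" and th: "0 \<le> \<Theta>" "\<Theta> \<le> P"
  shows "emeasure lborel (PS P o\<^sub>0 \<Theta> \<inter> {a..<a + real N * P}) = ennreal (real N * \<Theta>)"
proof (induction N)
  case 0 then show ?case by simp
next
  case (Suc N)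
  have nn: "0 \<le> P * real N" using P by simp
  have eq: "PS P o\<^sub>0 \<Theta> \<inter> {a..<a + real (Suc N) * P} =
     (PS P o\<^sub>0 \<Theta> \<inter> {a..<a + real N * P}) \<union> (PS P o\<^sub>0 \<Theta> \<inter> {(a + real N * P)..<(a + real N * P) + P})"
    apply (auto simp: algebra_simps) using nn P by linarith+
  have "emeasure lborel ((PS P o\<^sub>0 \<Theta> \<inter> {a..<a + real N * P}) \<union> (PS P o\<^sub>0 \<Theta> \<inter> {(a + real N * P)..<(a + real N * P) + P}))
     = emeasure lborel (PS P o\<^sub>0 \<Theta> \<inter> {a..<a + real N * P}) + emeasure lborel (PS P o\<^sub>0 \<Theta> \<inter> {(a + real N * P)..<(a + real N * P) + P})"
    using PS_borel by (intro plus_emeasure[symmetric]) auto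
  also have "\<dots> = ennreal (real N * \<Theta>) + ennreal \<Theta>" using Suc PS_window[OF P th] by simp
  also have "\<dots> = ennreal (real (Suc N) * \<Theta>)" using th by (subst ennreal_plus[symmetric]) (auto simp: algebra_simps)
  finally show ?case using eq by simp
qed



lemma r_mono:
  assumes rsep: "\<forall>k. r k + Tr \<le> r (Suc k)" and Tp: "0 < (Tr::real)"
  shows "j < k \<Longrightarrow> r j + Tr \<le> r k"
proof (induction k)
  case 0 then show ?case by simp
next
  case (Suc k)
  show ?case
  proof (cases "j = k")
    case True then show ?thesis using rsep by simp
  next
    case False
    then have "r j + Tr \<le> r k" using Suc by simp
    then show ?thesis using rsep[rule_format, of k] Tp by linarith
  qed
qed

lemma edf_core:
  fixes S :: "real set" and Tr Cr :: real and r e :: "nat \<Rightarrow> real" and \<sigma> :: "real \<Rightarrow> nat option"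
  assumes Sb: "S \<in> sets borel"
    and supp: "\<forall>a. ennreal Cr \<le> emeasure lborel (S \<inter> {a..<a+Tr})"
    and Tp: "0 < Tr"
    and rsep: "\<forall>k. r k + Tr \<le> r (Suc k)"
    and eb: "\<forall>k. 0 \<le> e k \<and> e k \<le> Cr"
    and sched1: "\<forall>t k. \<sigma> t = Some k \<longrightarrow> t \<in> S \<and> pending r e \<sigma> k t \<and> (\<forall>k'. pending r e \<sigma> k' t \<longrightarrow> r k + Tr \<le> r k' + Tr)"
    and sched2: "\<forall>t. t \<in> S \<and> (\<exists>k. pending r e \<sigma> k t) \<longrightarrow> \<sigma> t \<noteq> None"
  shows "ennreal (e k) \<le> emeasure lebesgue {s. s \<le> r k + Tr \<and> \<sigma> s = Some k}
     \<and> (\<forall>t. r k + Tr \<le> t \<longrightarrow> \<not> pending r e \<sigma> k t)"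
proof (induction k rule: less_induct)
  case (less k)
  have IH: "\<And>j t. j < k \<Longrightarrow> r j + Tr \<le> t \<Longrightarrow> \<not> pending r e \<sigma> j t" using less by blast
  have Sl: "\<And>X. X \<in> sets borel \<Longrightarrow> X \<in> sets lebesgue" by simp
  have eml: "\<And>X. X \<in> sets borel \<Longrightarrow> emeasure lebesgue X = emeasure lborel X" by simp
  have Fact1: "\<sigma> t = Some k" if t: "r k \<le> t" "t \<in> S" "pending r e \<sigma> k t" for t
  proof -
    obtain j where j: "\<sigma> t = Some j" using sched2 t by blast
    have pj: "pending r e \<sigma> j t" and rj: "r j + Tr \<le> r k + Tr" using sched1 j t(3) by blast+
    have "\<not> j < k" using IH[of j t] pj rj t(1) r_mono[OF rsep Tp, of j k] by auto
    moreover have "\<not> k < j" using r_mono[OF rsep Tp, of k j] rj Tp by auto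
    ultimately show ?thesis using j by (metis linorder_neqE_nat)
  qed
  have Fact2: "t \<in> S \<and> r k \<le> t \<and> work \<sigma> k t < ennreal (e k)" if "\<sigma> t = Some k" for t
    using sched1 that unfolding pending_def by blast
  show ?case
  proof (cases "e k \<le> 0")
    case True
    then have "ennreal (e k) = 0" by (simp add: ennreal_eq_0_iff)
    then show ?thesis unfolding pending_def by simp
  next
    case False
    define E where "E = e k"
    have E0: "0 < E" using False E_def by simp
    have ECr: "E \<le> Cr" using eb E_def by simp
    define d where "d = r k + Tr"
    define G where "G t = measure lborel (S \<inter> {r k..<t})" for t
    have Sib: "\<And>a b. S \<inter> {a..<b} \<in> sets borel" using Sb by auto
    have fin: "emeasure lborel (S \<inter> {a..<b}) \<noteq> top" for a b
    proof -
      have "emeasure lborel (S \<inter> {a..<b}) \<le> emeasure lborel {a..<b}"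
        by (intro emeasure_mono) auto
      also have "\<dots> < top"
        by (cases "a \<le> b") auto
      finally show ?thesis by simp
    qed
    have Gem: "emeasure lborel (S \<inter> {r k..<t}) = ennreal (G t)" for t
      unfolding G_def using fin by (simp add: emeasure_eq_ennreal_measure)
    have G0: "0 \<le> G t" for t unfolding G_def by simp
    have Glip: "G t \<le> G s + (t - s)" if "s \<le> t" for s t
    proof -
      have "emeasure lborel (S \<inter> {r k..<t}) \<le> emeasure lborel (S \<inter> {r k..<s} \<union> {s..<t})"
        using Sib by (intro emeasure_mono) auto
      also have "\<dots> \<le> emeasure lborel (S \<inter> {r k..<s}) + emeasure lborel {s..<t}"
        using Sib by (intro emeasure_subadditive) auto
      also have "\<dots> = ennreal (G s) + ennreal (t - s)" using Gem that by simp
      also have "\<dots> = ennreal (G s + (t - s))" using G0 that by (simp add: ennreal_plus)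
      finally have "ennreal (G t) \<le> ennreal (G s + (t - s))" using Gem by simp
      moreover have nn: "0 \<le> G s + (t - s)" using G0[of s] that by simp
      ultimately show ?thesis using ennreal_le_iff[OF nn] by blast
    qed
    have Gmono: "G s \<le> G t" if "s \<le> t" for s t
    proof -
      have "emeasure lborel (S \<inter> {r k..<s}) \<le> emeasure lborel (S \<inter> {r k..<t})"
        using Sib that by (intro emeasure_mono) auto
      then show ?thesis using Gem G0 by (simp add: ennreal_le_iff)
    qed
    have Gd: "E \<le> G d"
    proof -
      have "ennreal Cr \<le> ennreal (G d)" using supp Gem unfolding d_def by metis
      then have "Cr \<le> G d" using G0 by (simp add: ennreal_le_iff)
      then show ?thesis using ECr by simp
    qed
    define L where "L = {t. r k \<le> t \<and> E \<le> G t}"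
    define c where "c = Inf L"
    have dL: "d \<in> L" unfolding L_def d_def using Gd Tp d_def by simp
    have bddL: "bdd_below L" unfolding L_def by (rule bdd_belowI[of _ "r k"]) auto
    have cd: "c \<le> d" unfolding c_def using dL bddL by (rule cInf_lower)
    have rc: "r k \<le> c" unfolding c_def using dL by (intro cInf_greatest) (auto simp: L_def)
    have below: "G t < E" if "r k \<le> t" "t < c" for t
    proof (rule ccontr)
      assume "\<not> G t < E"
      then have "t \<in> L" using that unfolding L_def by simp
      then have "c \<le> t" unfolding c_def using bddL by (rule cInf_lower)
      then show False using that by simp
    qed
    have Gc: "E \<le> G c"
    proof (rule ccontr)
      assume "\<not> E \<le> G c"
      then have "c < c + (E - G c)" by simp
      then obtain t where t: "t \<in> L" "t < c + (E - G c)"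
        using cInf_less_iff[of L "c + (E - G c)"] dL bddL unfolding c_def by blast
      have "c \<le> t" unfolding c_def using t(1) bddL by (rule cInf_lower)
      then have "G t \<le> G c + (t - c)" by (rule Glip)
      moreover have "E \<le> G t" using t(1) unfolding L_def by simp
      ultimately show False using t(2) by simp
    qed
    define A where "A x = {s. s < x \<and> \<sigma> s = Some k}" for x
    have workA: "work \<sigma> k x = emeasure lebesgue (A x)" for x unfolding work_def A_def by simp
    have pa: "\<sigma> t = Some k" if "r k \<le> t" "t < c" "t \<in> S" for t
    proof (rule Fact1[OF that(1,3)])
      have "A t \<subseteq> S \<inter> {r k..<t}" unfolding A_def using Fact2 by auto
      then have "emeasure lebesgue (A t) \<le> emeasure lebesgue (S \<inter> {r k..<t})"
        using Sib by (intro emeasure_mono) auto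
      also have "\<dots> = ennreal (G t)" using Gem eml[OF Sib] by simp
      also have "\<dots> < ennreal E" using below[OF that(1,2)] E0 by (intro ennreal_lessI) auto
      finally show "pending r e \<sigma> k t" unfolding pending_def workA E_def using that by simp
    qed
    have Ac: "A c = S \<inter> {r k..<c}"
      unfolding A_def using pa Fact2 by auto
    have c1: "A x \<notin> sets lebesgue" if "c \<le> x" "\<sigma> x = Some k" for x
    proof
      assume Ax: "A x \<in> sets lebesgue"
      have "A c \<subseteq> A x" unfolding A_def using that by auto
      then have "emeasure lebesgue (A c) \<le> emeasure lebesgue (A x)" using Ax by (rule emeasure_mono)
      moreover have "emeasure lebesgue (A c) = ennreal (G c)" using Ac Gem eml[OF Sib] by simp
      moreover have "ennreal E \<le> ennreal (G c)" using Gc by (rule ennreal_leI)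
      moreover have "emeasure lebesgue (A x) < ennreal E"
        using Fact2[OF that(2)] workA E_def by simp
      ultimately show False by (metis leD order_trans)
    qed
    have c2: "A x \<in> sets lebesgue" if "c \<le> x" "x \<in> S" "\<sigma> x \<noteq> Some k" for x
    proof -
      have "\<not> pending r e \<sigma> k x" using Fact1[of x] that rc by auto
      then have "ennreal E \<le> emeasure lebesgue (A x)" unfolding pending_def workA E_def
        using that rc by auto
      moreover have "0 < ennreal E" using E0 by simp
      ultimately have "emeasure lebesgue (A x) \<noteq> 0" by auto
      then show ?thesis using emeasure_notin_sets by blast
    qed
    have c3: "\<sigma> y = Some k" if "c \<le> x" "\<sigma> x = Some k" "y \<in> S" "x < y" for x y
    proof (rule ccontr)
      assume "\<sigma> y \<noteq> Some k"
      then have "A y \<in> sets lebesgue" using c2[of y] that by simp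
      moreover have "A x = A y \<inter> {..<x}" unfolding A_def using that by auto
      moreover have "{..<x} \<in> sets lebesgue" by (intro Sl) simp
      ultimately have "A x \<in> sets lebesgue" by (metis sets.Int)
      then show False using c1 that by blast
    qed
    have c4: "\<sigma> b \<noteq> Some k" if "c \<le> b" for b
    proof
      assume sb: "\<sigma> b = Some k"
      define U where "U = {x. \<exists>y. c \<le> y \<and> y \<le> x \<and> \<sigma> y = Some k}"
      have "is_interval U" unfolding is_interval_1 U_def by (auto intro: order_trans)
      then have Ub: "U \<in> sets borel" by (rule real_interval_borel_measurable)
      have "A b = (S \<inter> {r k..<c}) \<union> (S \<inter> U \<inter> {..<b})"
      proof (intro set_eqI iffI)
        fix s assume "s \<in> A b"
        then have s: "s < b" "\<sigma> s = Some k" unfolding A_def by auto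
        then show "s \<in> (S \<inter> {r k..<c}) \<union> (S \<inter> U \<inter> {..<b})"
        proof (cases "s < c")
          case True then show ?thesis using Fact2[OF s(2)] by auto
        next
          case False
          then have "s \<in> U" unfolding U_def using s(2) by (intro CollectI exI[of _ s]) simp
          then show ?thesis using Fact2[OF s(2)] s(1) by auto
        qed
      next
        fix s assume s: "s \<in> (S \<inter> {r k..<c}) \<union> (S \<inter> U \<inter> {..<b})"
        show "s \<in> A b"
        proof (cases "s \<in> S \<inter> {r k..<c}")
          case True then show ?thesis unfolding A_def using pa that by auto
        next
          case False
          then have s2: "s \<in> S" "s \<in> U" "s < b" using s by auto
          then obtain y where y: "c \<le> y" "y \<le> s" "\<sigma> y = Some k" unfolding U_def by blast
          have "\<sigma> s = Some k"
          proof (cases "y = s")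
            case True then show ?thesis using y by simp
          next
            case False then show ?thesis using c3[of y s] y s2 by simp
          qed
          then show ?thesis unfolding A_def using s2 by simp
        qed
      qed
      also have "\<dots> \<in> sets lebesgue" using Sb Ub by (intro Sl) auto
      finally show False using c1[OF that sb] by blast
    qed
    have Aall: "\<sigma> s = Some k \<longleftrightarrow> s \<in> S \<and> r k \<le> s \<and> s < c" for s
    proof
      assume h: "\<sigma> s = Some k"
      have "\<not> c \<le> s" using c4[of s] h by blast
      then show "s \<in> S \<and> r k \<le> s \<and> s < c" using Fact2[OF h] by simp
    next
      assume "s \<in> S \<and> r k \<le> s \<and> s < c"
      then show "\<sigma> s = Some k" using pa by blast
    qed
    have "{s. s \<le> r k + Tr \<and> \<sigma> s = Some k} = S \<inter> {r k..<c}"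
    proof (intro set_eqI)
      fix s
      have "s < c \<Longrightarrow> s \<le> r k + Tr" using cd unfolding d_def by simp
      then show "s \<in> {s. s \<le> r k + Tr \<and> \<sigma> s = Some k} \<longleftrightarrow> s \<in> S \<inter> {r k..<c}"
        using Aall[of s] by auto
    qed
    then have m1: "emeasure lebesgue {s. s \<le> r k + Tr \<and> \<sigma> s = Some k} = ennreal (G c)"
      using Gem eml[OF Sib] by simp
    have m2: "\<not> pending r e \<sigma> k t" if "r k + Tr \<le> t" for t
    proof -
      have "A t = S \<inter> {r k..<c}"
      proof (intro set_eqI)
        fix s
        have "s < c \<Longrightarrow> s < t" using cd that unfolding d_def by simp
        then show "s \<in> A t \<longleftrightarrow> s \<in> S \<inter> {r k..<c}"
          unfolding A_def using Aall[of s] by auto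
      qed
      then have "work \<sigma> k t = ennreal (G c)" using workA Gem eml[OF Sib] by simp
      then show ?thesis unfolding pending_def using Gc E_def by (simp add: ennreal_leI not_less)
    qed
    show ?thesis using m1 m2 Gc E_def by (simp add: ennreal_leI)
  qed
qed



lemma Pg_dvd: "i < n \<Longrightarrow> Pi_gcd n T dvd T i"
  unfolding Pi_gcd_def by (rule Gcd_dvd) simp

lemma Pg_pos:
  assumes "0 < n" "\<forall>i<n. 0 < T i"
  shows "0 < Pi_gcd n T"
proof (rule ccontr)
  assume "\<not> 0 < Pi_gcd n T"
  then have z: "Pi_gcd n T = 0" by simp
  have "Pi_gcd n T dvd T 0" using assms(1) by (rule Pg_dvd)
  then have "T 0 = 0" using z by simp
  moreover have "0 < T 0" using assms(2)[rule_format, OF assms(1)] .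
  ultimately show False by simp
qed

lemma offs_Suc: "offs n T C (Suc i) = offs n T C i + Theta n T C i"
  unfolding offs_def by simp

lemma Theta_bounds:
  assumes "i < n" "\<forall>i<n. 0 < T i" "\<forall>i<n. 0 < C i \<and> C i \<le> real (T i)" "0 < Pi_gcd n T"
  shows "0 < Theta n T C i" "Theta n T C i \<le> real (Pi_gcd n T)"
proof -
  have T: "0 < real (T i)" and C: "0 < C i" "C i \<le> real (T i)" using assms by auto
  have P: "0 < real (Pi_gcd n T)" using assms by simp
  show "0 < Theta n T C i" unfolding Theta_def using T C P by simp
  have "real (Pi_gcd n T) * C i \<le> real (Pi_gcd n T) * real (T i)" using C P by simp
  then show "Theta n T C i \<le> real (Pi_gcd n T)" unfolding Theta_def using T by (simp add: divide_le_eq)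
qed

lemma offs_mono:
  assumes "i \<le> j" "j \<le> n" "\<And>k. k < n \<Longrightarrow> 0 \<le> Theta n T C k"
  shows "offs n T C i \<le> offs n T C j"
  unfolding offs_def using assms by (intro sum_mono2) auto

lemma offs_nonneg:
  assumes "i \<le> n" "\<And>k. k < n \<Longrightarrow> 0 \<le> Theta n T C k"
  shows "0 \<le> offs n T C i"
  unfolding offs_def using assms by (intro sum_nonneg) auto

lemma offs_total:
  assumes "\<forall>i<n. 0 < T i"
  shows "offs n T C n = real (Pi_gcd n T) * (\<Sum>i<n. C i / real (T i))"
  unfolding offs_def Theta_def by (simp add: sum_distrib_left)

lemma runs_eq: "runs n T C i p t \<longleftrightarrow> i < n \<and>
   offs n T C i \<le> real p * real (Pi_gcd n T) + (t - real (Pi_gcd n T) * of_int \<lfloor>t / real (Pi_gcd n T)\<rfloor>) \<and>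
   real p * real (Pi_gcd n T) + (t - real (Pi_gcd n T) * of_int \<lfloor>t / real (Pi_gcd n T)\<rfloor>) < offs n T C i + Theta n T C i"
  unfolding runs_def Let_def by simp

lemma frac_bounds:
  fixes P t :: real assumes "0 < P"
  shows "0 \<le> t - P * of_int \<lfloor>t / P\<rfloor>" "t - P * of_int \<lfloor>t / P\<rfloor> < P"
proof -
  have f1: "of_int \<lfloor>t/P\<rfloor> \<le> t/P" and f2: "t/P < of_int \<lfloor>t/P\<rfloor> + 1" by linarith+
  have "of_int \<lfloor>t/P\<rfloor> * P \<le> t" by (metis f1 pos_le_divide_eq[OF assms])
  moreover have "t < (of_int \<lfloor>t/P\<rfloor> + 1) * P" by (metis f2 pos_divide_less_eq[OF assms])
  ultimately show "0 \<le> t - P * of_int \<lfloor>t / P\<rfloor>" "t - P * of_int \<lfloor>t / P\<rfloor> < P"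
    by (simp_all add: algebra_simps)
qed

lemma split_point:
  fixes f :: "nat \<Rightarrow> real"
  shows "0 \<le> x \<Longrightarrow> x < (\<Sum>k<N. f k) \<Longrightarrow> \<exists>i<N. (\<Sum>k<i. f k) \<le> x \<and> x < (\<Sum>k<Suc i. f k)"
proof (induction N)
  case 0 then show ?case by simp
next
  case (Suc N)
  show ?case
  proof (cases "x < (\<Sum>k<N. f k)")
    case True
    then obtain i where "i<N" "(\<Sum>k<i. f k) \<le> x \<and> x < (\<Sum>k<Suc i. f k)" using Suc by blast
    then show ?thesis by (intro exI[of _ i]) simp
  next
    case False then show ?thesis using Suc by (intro exI[of _ N]) simp
  qed
qed

lemma valid_iff:
  assumes n: "0 < n" and T: "\<forall>i<n. 0 < T i" and C: "\<forall>i<n. 0 < C i \<and> C i \<le> real (T i)"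
  shows "valid_on n T C m \<longleftrightarrow> (\<Sum>i<n. C i / real (T i)) \<le> real m"
proof -
  define P where "P = real (Pi_gcd n T)"
  have Pg: "0 < Pi_gcd n T" using Pg_pos n T by blast
  have P: "0 < P" unfolding P_def using Pg by simp
  have th: "0 < Theta n T C k" "Theta n T C k \<le> P" if "k < n" for k
    using Theta_bounds[OF that T C Pg] unfolding P_def by auto
  have th0: "\<And>k. k < n \<Longrightarrow> 0 \<le> Theta n T C k" using th by (simp add: less_imp_le)
  have tot: "offs n T C n = P * (\<Sum>i<n. C i / real (T i))" unfolding P_def by (rule offs_total[OF T])
  show ?thesis
  proof
    assume v: "valid_on n T C m"
    show "(\<Sum>i<n. C i / real (T i)) \<le> real m"
    proof (rule ccontr)
      assume "\<not> ?thesis"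
      then have "real m < (\<Sum>i<n. C i / real (T i))" by simp
      then have "P * real m < offs n T C n" using tot P by simp
      then obtain i where i: "i < n" "offs n T C i \<le> P * real m" "P * real m < offs n T C (Suc i)"
        using split_point[where f="Theta n T C" and x="P * real m" and N=n] P unfolding offs_def by auto
      have "runs n T C i m 0" unfolding runs_eq P_def[symmetric] using i offs_Suc[of n T C i]
        by (simp add: algebra_simps)
      then show False using v unfolding valid_on_def by blast
    qed
  next
    assume s: "(\<Sum>i<n. C i / real (T i)) \<le> real m"
    have u: "0 \<le> t - P * of_int \<lfloor>t / P\<rfloor>" "t - P * of_int \<lfloor>t / P\<rfloor> < P" for t
      using frac_bounds[OF P] by auto
    have 1: "p < m" if "runs n T C i p t" for i p t
    proof -
      have h: "i < n" "real p * P + (t - P * of_int \<lfloor>t / P\<rfloor>) < offs n T C (Suc i)"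
        using that offs_Suc[of n T C i] unfolding runs_eq P_def[symmetric] by auto
      have "offs n T C (Suc i) \<le> offs n T C n" using h(1) th0 by (intro offs_mono) auto
      also have "\<dots> \<le> P * real m" using tot s P by simp
      finally have X: "offs n T C (Suc i) \<le> P * real m" .
      have "real p * P < real m * P" using X h(2) u(1)[of t] mult.commute[of "real m" P] by linarith
      then have "real p < real m" using P by simp
      then show ?thesis by simp
    qed
    have 2: "p = q" if "runs n T C i p t" "runs n T C i q t" for i p q t
    proof -
      have h: "i < n" "offs n T C i \<le> real p * P + (t - P * of_int \<lfloor>t / P\<rfloor>)"
           "real p * P + (t - P * of_int \<lfloor>t / P\<rfloor>) < offs n T C i + Theta n T C i"
           "offs n T C i \<le> real q * P + (t - P * of_int \<lfloor>t / P\<rfloor>)"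
           "real q * P + (t - P * of_int \<lfloor>t / P\<rfloor>) < offs n T C i + Theta n T C i"
        using that unfolding runs_eq P_def[symmetric] by auto
      have "(real p - real q) * P < 1 * P" using h th[OF h(1)] by (simp add: algebra_simps)
      then have a: "real p - real q < 1" using P by (simp only: mult_less_cancel_right_pos)
      have "(real q - real p) * P < 1 * P" using h th[OF h(1)] by (simp add: algebra_simps)
      then have b: "real q - real p < 1" using P by (simp only: mult_less_cancel_right_pos)
      from a b show ?thesis by linarith
    qed
    have 3: "i = k" if "runs n T C i p t" "runs n T C k p t" for i k p t
    proof (rule ccontr)
      assume ne: "i \<noteq> k"
      have A: "\<And>a b. a < b \<Longrightarrow> runs n T C a p t \<Longrightarrow> runs n T C b p t \<Longrightarrow> False"
      proof -
        fix a b assume ab: "a < b" "runs n T C a p t" "runs n T C b p t"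
        have h: "b < n" "offs n T C b \<le> real p * P + (t - P * of_int \<lfloor>t / P\<rfloor>)"
           "real p * P + (t - P * of_int \<lfloor>t / P\<rfloor>) < offs n T C (Suc a)"
          using ab offs_Suc[of n T C a] unfolding runs_eq P_def[symmetric] by auto
        have "offs n T C (Suc a) \<le> offs n T C b" using ab(1) h(1) th0 by (intro offs_mono) auto
        then show False using h by simp
      qed
      show False using ne A that by (metis linorder_neqE_nat)
    qed
    show "valid_on n T C m" unfolding valid_on_def using 1 2 3 by blast
  qed
qed



lemma supply_PS:
  assumes i: "i < n" and P: "0 < real (Pi_gcd n T)" and th0: "\<And>k. k < n \<Longrightarrow> 0 \<le> Theta n T C k"
  shows "server_supply n T C i = PS (real (Pi_gcd n T)) (offs n T C i) (Theta n T C i)"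
proof -
  have o: "0 \<le> offs n T C i" using i th0 by (intro offs_nonneg) auto
  show ?thesis
    unfolding server_supply_def PS_def runs_eq
    using supply_repr_gen[OF P o, where \<Theta>="Theta n T C i"] i by auto
qed

lemma sched_ok:
  assumes i: "i < n" and T: "\<forall>i<n. 0 < T i" and C: "\<forall>i<n. 0 < C i \<and> C i \<le> real (T i)"
    and adm: "admissible T C i r e" and ed: "edf_sched n T C i r e \<sigma>"
  shows "meets_deadlines T i r e \<sigma>"
proof -
  have n: "0 < n" using i by simp
  define P where "P = real (Pi_gcd n T)"
  have Pg: "0 < Pi_gcd n T" using Pg_pos n T by blast
  have P: "0 < P" unfolding P_def using Pg by simp
  have th: "0 < Theta n T C k" "Theta n T C k \<le> P" if "k < n" for k
    using Theta_bounds[OF that T C Pg] unfolding P_def by auto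
  have th0: "\<And>k. k < n \<Longrightarrow> 0 \<le> Theta n T C k" using th by (simp add: less_imp_le)
  define S where "S = server_supply n T C i"
  have SPS: "S = PS P (offs n T C i) (Theta n T C i)"
    unfolding S_def P_def using supply_PS[OF i _ th0] P unfolding P_def by blast
  obtain N where N: "T i = Pi_gcd n T * N" using Pg_dvd[OF i] by (auto elim: dvdE)
  have TN: "real (T i) = real N * P" unfolding P_def using N by simp
  have Ti: "0 < real (T i)" using T i by simp
  have NC: "real N * Theta n T C i = C i"
  proof -
    have "real N \<noteq> 0" using TN Ti by (metis mult_eq_0_iff less_irrefl)
    moreover have "P \<noteq> 0" using P by simp
    ultimately show ?thesis unfolding Theta_def P_def[symmetric] TN by (simp add: field_simps)
  qed
  have dummy: True
  proof -
    show ?thesis by simp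
  qed
  have supp: "\<forall>a. ennreal (C i) \<le> emeasure lborel (S \<inter> {a..<a + real (T i)})"
  proof
    fix a
    have "emeasure lborel (S \<inter> {a..<a + real (T i)}) = ennreal (real N * Theta n T C i)"
      unfolding SPS TN using PS_windows[OF P] th[OF i] by (simp add: less_imp_le)
    then show "ennreal (C i) \<le> emeasure lborel (S \<inter> {a..<a + real (T i)})" using NC by simp
  qed
  have rsep: "\<forall>k. r k + real (T i) \<le> r (Suc k)" and eb: "\<forall>k. 0 \<le> e k \<and> e k \<le> C i"
    using adm unfolding admissible_def by auto
  have s1: "\<forall>t k. \<sigma> t = Some k \<longrightarrow> t \<in> S \<and> pending r e \<sigma> k t \<and> (\<forall>k'. pending r e \<sigma> k' t \<longrightarrow> r k + real (T i) \<le> r k' + real (T i))"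
    and s2: "\<forall>t. t \<in> S \<and> (\<exists>k. pending r e \<sigma> k t) \<longrightarrow> \<sigma> t \<noteq> None"
    using ed unfolding edf_sched_def S_def by auto
  have Sb: "S \<in> sets borel" unfolding SPS by (rule PS_borel)
  show ?thesis unfolding meets_deadlines_def
    using edf_core[OF Sb supp Ti rsep eb s1 s2] by blast
qed

theorem theorem6:
  fixes n m :: nat and T :: "nat \<Rightarrow> nat" and C :: "nat \<Rightarrow> real"
  assumes "\<forall>i<n. 0 < T i"
    and "\<forall>i<n. 0 < C i \<and> C i \<le> real (T i)"
    and "0 < m"
  shows "VC_IDT_schedulable n T C m \<longleftrightarrow> (\<Sum>i<n. C i / real (T i)) \<le> real m"
proof (cases "n = 0")
  case True
  have "valid_on n T C m" unfolding valid_on_def runs_def Let_def using True by simp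
  then show ?thesis unfolding VC_IDT_schedulable_def using True by simp
next
  case False
  then have n: "0 < n" by simp
  have "\<forall>i<n. \<forall>r e \<sigma>. admissible T C i r e \<and> edf_sched n T C i r e \<sigma> \<longrightarrow> meets_deadlines T i r e \<sigma>"
    using sched_ok[OF _ assms(1,2)] by blast
  then show ?thesis unfolding VC_IDT_schedulable_def using valid_iff[OF n assms(1,2)] by blast
qed

end
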